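(* For every fixed $\alpha>1$ and $c>1$, $\mathrm{amls}(\alpha,c,x)$ is a continuous function of $x$ on the interval $(1,\infty)$.
   Context: Definition of amls: let $\mathcal{H}(x)=-x\ln x-(1-x)\ln(1-x)$ with $0\ln0=0$, $\mathcal{H}(0)=\mathcal{H}(1)=0$. For $\alpha,\beta,c\ge1$ define $\delta_{\alpha,\beta}(\kappa,\tau)=\frac{\frac{\beta}{\alpha}\kappa-\frac{\tau}{\alpha}}{1-\tau}$ if $\tau\ne1$ and $=\frac1\alpha$ if $\tau=1$; $\gamma_{\alpha,\beta}(\kappa,\tau)=(1-\frac\beta\alpha)\frac\kappa\tau+\frac1\alpha$ if $\tau\ne0$ and $=\frac1\alpha$ if $\tau=0$; $g_{\alpha,\beta,c}(\kappa,\tau)=\frac{\beta\kappa-\tau}{\alpha}\ln c-\tau\mathcal{H}(\gamma_{\alpha,\beta}(\kappa,\tau))-(1-\tau)\mathcal{H}(\delta_{\alpha,\beta}(\kappa,\tau))+\mathcal{H}(\kappa)$; $M_{\alpha,\beta}(\kappa)=\frac{\beta-\alpha}{1-\alpha\kappa}\kappa$ if $\alpha<\beta$, $0$ if $\alpha=\beta$, $\frac{\alpha-\beta}{\alpha-1}\kappa$ if $\alpha>\beta$. Then $\mathrm{amls}(\alpha,c,\beta)=\exp\left(\max_{0\le\kappa\le1/\beta}\ \min_{M_{\alpha,\beta}(\kappa)\le\tau\le\beta\kappa} g_{\alpha,\beta,c}(\kappa,\tau)\right)$. *)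

theory Defs
  imports "HOL-Analysis.Analysis"
begin

definition xlnx :: "real \<Rightarrow> real" where
  "xlnx x = (if x = 0 then 0 else x * ln x)"

definition Hent :: "real \<Rightarrow> real" where
  "Hent x = - xlnx x - xlnx (1 - x)"

definition delta_ab :: "real \<Rightarrow> real \<Rightarrow> real \<Rightarrow> real \<Rightarrow> real" where
  "delta_ab \<alpha> \<beta> \<kappa> \<tau> =
     (if \<tau> \<noteq> 1 then ((\<beta> / \<alpha>) * \<kappa> - \<tau> / \<alpha>) / (1 - \<tau>) else 1 / \<alpha>)"

definition gamma_ab :: "real \<Rightarrow> real \<Rightarrow> real \<Rightarrow> real \<Rightarrow> real" where
  "gamma_ab \<alpha> \<beta> \<kappa> \<tau> =
     (if \<tau> \<noteq> 0 then (1 - \<beta> / \<alpha>) * (\<kappa> / \<tau>) + 1 / \<alpha> else 1 / \<alpha>)"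

definition g_abc :: "real \<Rightarrow> real \<Rightarrow> real \<Rightarrow> real \<Rightarrow> real \<Rightarrow> real" where
  "g_abc \<alpha> \<beta> c \<kappa> \<tau> =
     (\<beta> * \<kappa> - \<tau>) / \<alpha> * ln c
     - \<tau> * Hent (gamma_ab \<alpha> \<beta> \<kappa> \<tau>)
     - (1 - \<tau>) * Hent (delta_ab \<alpha> \<beta> \<kappa> \<tau>)
     + Hent \<kappa>"

definition M_ab :: "real \<Rightarrow> real \<Rightarrow> real \<Rightarrow> real" where
  "M_ab \<alpha> \<beta> \<kappa> =
     (if \<alpha> < \<beta> then (\<beta> - \<alpha>) / (1 - \<alpha> * \<kappa>) * \<kappa>
      else if \<alpha> = \<beta> then 0
      else (\<alpha> - \<beta>) / (\<alpha> - 1) * \<kappa>)"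

text \<open>amls(alpha, c, beta); the max/min of the paper are rendered as SUP/INF
  (they coincide whenever the max/min are attained).\<close>
definition amls :: "real \<Rightarrow> real \<Rightarrow> real \<Rightarrow> real" where
  "amls \<alpha> c \<beta> =
     exp (SUP \<kappa>\<in>{0..1/\<beta>}.
            INF \<tau>\<in>{M_ab \<alpha> \<beta> \<kappa>..\<beta> * \<kappa>}. g_abc \<alpha> \<beta> c \<kappa> \<tau>)"

end

theory Submission
  imports Defs "HOL-Real_Asymp.Real_Asymp"
begin


definition xl :: "real \<Rightarrow> real" where "xl x = (if x \<le> 0 then 0 else x * ln x)"

lemma xl_xlnx: "x \<ge> 0 \<Longrightarrow> xl x = xlnx x"
  by (auto simp: xl_def xlnx_def)

lemma isCont_xl: "isCont xl x"
proof (cases "x = 0")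
  case True
  have l: "continuous (at_left 0) xl"
    unfolding continuous_within
  proof -
    have "eventually (\<lambda>y. 0 = xl y) (at_left (0::real))"
      by (auto simp: eventually_at_left_field xl_def intro!: exI[of _ "-1"])
    from Lim_transform_eventually[OF tendsto_const this]
    show "(xl \<longlongrightarrow> xl 0) (at_left 0)" by (simp add: xl_def[of 0])
  qed
  have r: "continuous (at_right 0) xl"
    unfolding continuous_within
  proof -
    have "((\<lambda>y::real. y * ln y) \<longlongrightarrow> 0) (at_right 0)" by real_asymp
    moreover have "eventually (\<lambda>y. y * ln y = xl y) (at_right (0::real))"
      by (auto simp: eventually_at_right_field xl_def intro!: exI[of _ "1"])
    ultimately have "(xl \<longlongrightarrow> 0) (at_right 0)"
      by (rule Lim_transform_eventually)
    then show "(xl \<longlongrightarrow> xl 0) (at_right 0)" by (simp add: xl_def[of 0])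
  qed
  show ?thesis using l r True continuous_at_split by blast
next
  case False
  then show ?thesis
  proof (cases "x > 0")
    case True
    have "isCont (\<lambda>y. y * ln y) x" using True by (intro continuous_intros) auto
    moreover have "eventually (\<lambda>y. y * ln y = xl y) (nhds x)"
      using eventually_nhds_in_open[of "{0<..}" x] True
      by (auto elim!: eventually_mono simp: xl_def)
    ultimately show ?thesis
      using isCont_cong[of "\<lambda>y. y * ln y" xl x] by blast
  next
    case False
    hence "x < 0" using \<open>x \<noteq> 0\<close> by auto
    have "eventually (\<lambda>y. 0 = xl y) (nhds x)"
      using eventually_nhds_in_open[of "{..<0}" x] \<open>x<0\<close>
      by (auto elim!: eventually_mono simp: xl_def)
    then show ?thesis
      using isCont_cong[of "\<lambda>y. 0" xl x] by auto
  qed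
qed

lemma continuous_on_xl [continuous_intros]:
  "continuous_on S f \<Longrightarrow> continuous_on S (\<lambda>x. xl (f x))"
  using continuous_on_compose2[of UNIV xl S f] isCont_xl
  by (simp add: continuous_at_imp_continuous_on)



lemma inf_sup_close:
  fixes f g :: "'b \<Rightarrow> real"
  assumes T: "T \<noteq> {}" and cl: "\<And>t. t \<in> T \<Longrightarrow> \<bar>f t - g t\<bar> \<le> e"
    and bf: "\<And>t. t \<in> T \<Longrightarrow> \<bar>f t\<bar> \<le> B" and bg: "\<And>t. t \<in> T \<Longrightarrow> \<bar>g t\<bar> \<le> B"
  shows "\<bar>(INF t\<in>T. f t) - (INF t\<in>T. g t)\<bar> \<le> e"
    and "\<bar>(SUP t\<in>T. f t) - (SUP t\<in>T. g t)\<bar> \<le> e"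
proof -
  have bbf: "bdd_below (f ` T)" "bdd_above (f ` T)"
    using bf by (intro bdd_belowI2[where m="-B"] bdd_aboveI2[where M=B]; force simp: abs_le_iff)+
  have bbg: "bdd_below (g ` T)" "bdd_above (g ` T)"
    using bg by (intro bdd_belowI2[where m="-B"] bdd_aboveI2[where M=B]; force simp: abs_le_iff)+
  have 1: "(INF t\<in>T. f t) - e \<le> (INF t\<in>T. g t)"
  proof (rule cINF_greatest[OF T])
    fix t assume t: "t \<in> T"
    have "(INF t\<in>T. f t) \<le> f t" by (rule cINF_lower[OF bbf(1) t])
    then show "(INF t\<in>T. f t) - e \<le> g t" using cl[OF t] by (simp add: abs_le_iff)
  qed
  have 2: "(INF t\<in>T. g t) - e \<le> (INF t\<in>T. f t)"
  proof (rule cINF_greatest[OF T])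
    fix t assume t: "t \<in> T"
    have "(INF t\<in>T. g t) \<le> g t" by (rule cINF_lower[OF bbg(1) t])
    then show "(INF t\<in>T. g t) - e \<le> f t" using cl[OF t] by (simp add: abs_le_iff)
  qed
  from 1 2 show "\<bar>(INF t\<in>T. f t) - (INF t\<in>T. g t)\<bar> \<le> e" by (simp add: abs_le_iff)
  have 3: "(SUP t\<in>T. f t) \<le> (SUP t\<in>T. g t) + e"
  proof (rule cSUP_least[OF T])
    fix t assume t: "t \<in> T"
    have "g t \<le> (SUP t\<in>T. g t)" by (rule cSUP_upper[OF t bbg(2)])
    then show "f t \<le> (SUP t\<in>T. g t) + e" using cl[OF t] by (simp add: abs_le_iff)
  qed
  have 4: "(SUP t\<in>T. g t) \<le> (SUP t\<in>T. f t) + e"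
  proof (rule cSUP_least[OF T])
    fix t assume t: "t \<in> T"
    have "f t \<le> (SUP t\<in>T. f t)" by (rule cSUP_upper[OF t bbf(2)])
    then show "g t \<le> (SUP t\<in>T. f t) + e" using cl[OF t] by (simp add: abs_le_iff)
  qed
  from 3 4 show "\<bar>(SUP t\<in>T. f t) - (SUP t\<in>T. g t)\<bar> \<le> e" by (simp add: abs_le_iff)
qed

lemma inf_sup_cont:
  fixes h :: "'a::metric_space \<times> 'b::metric_space \<Rightarrow> real"
  assumes S: "compact S" and T: "compact T" "T \<noteq> {}" and hc: "continuous_on (S \<times> T) h"
  shows "continuous_on S (\<lambda>y. INF t\<in>T. h (y,t))" "continuous_on S (\<lambda>y. SUP t\<in>T. h (y,t))"
proof -
  have cST: "compact (S \<times> T)" using S T by (simp add: compact_Times)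
  have uc: "uniformly_continuous_on (S \<times> T) h"
    by (rule compact_uniformly_continuous[OF hc cST])
  have "bounded (h ` (S \<times> T))" by (rule compact_imp_bounded[OF compact_continuous_image[OF hc cST]])
  then obtain B where B: "\<And>p. p \<in> S \<times> T \<Longrightarrow> \<bar>h p\<bar> \<le> B"
    unfolding bounded_iff by fastforce
  have key: "\<exists>d>0. \<forall>y\<in>S. \<forall>y'\<in>S. dist y' y < d \<longrightarrow>
       \<bar>(INF t\<in>T. h (y',t)) - (INF t\<in>T. h (y,t))\<bar> < e \<and>
       \<bar>(SUP t\<in>T. h (y',t)) - (SUP t\<in>T. h (y,t))\<bar> < e" if e: "e > 0" for e
  proof -
    from uc e obtain d where d: "d > 0"
      and hd: "\<And>x x'. x \<in> S \<times> T \<Longrightarrow> x' \<in> S \<times> T \<Longrightarrow> dist x' x < d \<Longrightarrow> dist (h x') (h x) < e/2"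
      unfolding uniformly_continuous_on_def by (metis half_gt_zero)
    show ?thesis
    proof (intro exI[of _ d] conjI ballI impI d)
      fix y y' assume y: "y \<in> S" and y': "y' \<in> S" and dy: "dist y' y < d"
      have cl: "\<bar>h (y',t) - h (y,t)\<bar> \<le> e/2" if t: "t \<in> T" for t
      proof -
        have "dist (y',t) (y,t) < d" using dy by (simp add: dist_Pair_Pair)
        then have "dist (h (y',t)) (h (y,t)) < e/2" using hd y y' t by blast
        then show ?thesis by (simp add: dist_real_def)
      qed
      have b1: "\<bar>h (y',t)\<bar> \<le> B" and b2: "\<bar>h (y,t)\<bar> \<le> B" if "t \<in> T" for t
        using B y y' that by auto
      show "\<bar>(INF t\<in>T. h (y',t)) - (INF t\<in>T. h (y,t))\<bar> < e"
        using inf_sup_close(1)[of T "\<lambda>t. h (y',t)" "\<lambda>t. h (y,t)" "e/2" B, OF T(2) cl b1 b2] e by linarith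
      show "\<bar>(SUP t\<in>T. h (y',t)) - (SUP t\<in>T. h (y,t))\<bar> < e"
        using inf_sup_close(2)[of T "\<lambda>t. h (y',t)" "\<lambda>t. h (y,t)" "e/2" B, OF T(2) cl b1 b2] e by linarith
    qed
  qed
  show "continuous_on S (\<lambda>y. INF t\<in>T. h (y,t))"
    unfolding continuous_on_iff dist_real_def using key by meson
  show "continuous_on S (\<lambda>y. SUP t\<in>T. h (y,t))"
    unfolding continuous_on_iff dist_real_def using key by meson
qed



definition G0 :: "real \<Rightarrow> real \<Rightarrow> real \<Rightarrow> real \<Rightarrow> real \<Rightarrow> real" where
 "G0 \<alpha> c \<beta> \<kappa> \<tau> = (\<beta>*\<kappa>-\<tau>)/\<alpha> * ln c + xl ((1-\<beta>/\<alpha>)*\<kappa> + \<tau>/\<alpha>)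
    + xl (\<tau> - ((1-\<beta>/\<alpha>)*\<kappa> + \<tau>/\<alpha>)) - xl \<tau> + xl ((\<beta>*\<kappa>-\<tau>)/\<alpha>)
    + xl (1-\<tau>-(\<beta>*\<kappa>-\<tau>)/\<alpha>) - xl (1-\<tau>) - xl \<kappa> - xl (1-\<kappa>)"

lemma xlnx_scale:
  assumes "0 < t" "0 \<le> a"
  shows "t * xlnx (a/t) = xl a - a * ln t"
proof (cases "a = 0")
  case True then show ?thesis by (simp add: xlnx_def xl_def)
next
  case False
  then have "a > 0" using assms by auto
  then have "ln (a/t) = ln a - ln t" using assms by (simp add: ln_div)
  have "t * xlnx (a/t) = a * ln (a/t)" using assms \<open>a>0\<close> by (simp add: xlnx_def)
  also have "\<dots> = a * (ln a - ln t)" using \<open>ln (a/t) = ln a - ln t\<close> by simp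
  finally show ?thesis using \<open>a>0\<close> by (simp add: xl_def right_diff_distrib)
qed

lemma Hent_scale:
  assumes "0 < t" "0 \<le> a" "a \<le> t"
  shows "t * Hent (a/t) = xl t - xl a - xl (t - a)"
proof -
  have e: "1 - a/t = (t-a)/t" using assms by (simp add: field_simps)
  have "t * Hent (a/t) = - (t * xlnx (a/t)) - t * xlnx ((t-a)/t)"
    unfolding Hent_def e by (simp add: right_diff_distrib)
  also have "\<dots> = - (xl a - a * ln t) - (xl (t-a) - (t-a) * ln t)"
    using assms by (simp add: xlnx_scale)
  also have "\<dots> = xl t - xl a - xl (t - a)"
    using assms by (simp add: xl_def algebra_simps)
  finally show ?thesis .
qed

lemma Hent_scale':
  assumes "0 \<le> t" "0 \<le> a" "a \<le> t"
  shows "t * Hent (if t \<noteq> 0 then a/t else z) = xl t - xl a - xl (t - a)"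
  using assms Hent_scale[of t a] by (cases "t = 0") (auto simp: xl_def)

lemma M_props:
  assumes "\<alpha> > 1" "\<beta> > 1" "0 \<le> \<kappa>" "\<beta>*\<kappa> \<le> 1"
  shows "0 \<le> M_ab \<alpha> \<beta> \<kappa>" "M_ab \<alpha> \<beta> \<kappa> \<le> \<beta>*\<kappa>"
    "\<alpha> < \<beta> \<Longrightarrow> (\<beta>-\<alpha>)*\<kappa> \<le> M_ab \<alpha> \<beta> \<kappa>"
    "\<beta> < \<alpha> \<Longrightarrow> (\<alpha>-1) * M_ab \<alpha> \<beta> \<kappa> = (\<alpha>-\<beta>)*\<kappa>"
proof -
  consider "\<alpha> < \<beta>" | "\<alpha> = \<beta>" | "\<beta> < \<alpha>" by linarith
  then have "0 \<le> M_ab \<alpha> \<beta> \<kappa> \<and> M_ab \<alpha> \<beta> \<kappa> \<le> \<beta>*\<kappa> \<and> (\<alpha> < \<beta> \<longrightarrow> (\<beta>-\<alpha>)*\<kappa> \<le> M_ab \<alpha> \<beta> \<kappa>)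
      \<and> (\<beta> < \<alpha> \<longrightarrow> (\<alpha>-1) * M_ab \<alpha> \<beta> \<kappa> = (\<alpha>-\<beta>)*\<kappa>)"
  proof cases
    case 1
    have "\<alpha>*\<kappa> < \<beta>*\<kappa> \<or> \<kappa> = 0" using 1 assms by (auto intro: mult_strict_right_mono)
    then have ak: "\<alpha>*\<kappa> < 1" using assms by auto
    have M: "M_ab \<alpha> \<beta> \<kappa> = (\<beta>-\<alpha>)*\<kappa>/(1-\<alpha>*\<kappa>)" using 1 by (simp add: M_ab_def)
    have d: "1 - \<alpha>*\<kappa> \<le> 1" using assms by auto
    have "(\<beta>-\<alpha>)*\<kappa> * (1-\<alpha>*\<kappa>) \<le> (\<beta>-\<alpha>)*\<kappa>"
      using d 1 assms by (intro mult_left_le) auto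
    then have l: "(\<beta>-\<alpha>)*\<kappa> \<le> (\<beta>-\<alpha>)*\<kappa>/(1-\<alpha>*\<kappa>)" using ak by (simp add: le_divide_eq)
    have "(\<beta>-\<alpha>)*\<kappa> \<le> \<beta>*\<kappa>*(1-\<alpha>*\<kappa>)"
    proof -
      have "\<alpha>*\<kappa>*(\<beta>*\<kappa>) \<le> \<alpha>*\<kappa>" using assms by (intro mult_left_le) auto
      then show ?thesis by (simp add: algebra_simps)
    qed
    then have u: "(\<beta>-\<alpha>)*\<kappa>/(1-\<alpha>*\<kappa>) \<le> \<beta>*\<kappa>" using ak by (simp add: divide_le_eq)
    have "0 \<le> (\<beta>-\<alpha>)*\<kappa>" using 1 assms by auto
    then show ?thesis using M l u 1 by auto
  next
    case 2 then show ?thesis using assms by (simp add: M_ab_def)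
  next
    case 3
    have M: "M_ab \<alpha> \<beta> \<kappa> = (\<alpha>-\<beta>)/(\<alpha>-1)*\<kappa>" using 3 by (simp add: M_ab_def)
    have "(\<alpha>-\<beta>)/(\<alpha>-1) \<le> \<beta>" using assms by (simp add: divide_le_eq algebra_simps)
    then have u: "(\<alpha>-\<beta>)/(\<alpha>-1)*\<kappa> \<le> \<beta>*\<kappa>" using assms by (intro mult_right_mono) auto
    have "0 \<le> (\<alpha>-\<beta>)/(\<alpha>-1)*\<kappa>" using assms 3 by auto
    then show ?thesis using M u 3 assms by auto
  qed
  then show "0 \<le> M_ab \<alpha> \<beta> \<kappa>" "M_ab \<alpha> \<beta> \<kappa> \<le> \<beta>*\<kappa>"
    "\<alpha> < \<beta> \<Longrightarrow> (\<beta>-\<alpha>)*\<kappa> \<le> M_ab \<alpha> \<beta> \<kappa>"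
    "\<beta> < \<alpha> \<Longrightarrow> (\<alpha>-1) * M_ab \<alpha> \<beta> \<kappa> = (\<alpha>-\<beta>)*\<kappa>" by auto
qed

lemma g_eq:
  assumes a1: "\<alpha> > 1" and b1: "\<beta> > 1" and k0: "0 \<le> \<kappa>" and bk: "\<beta>*\<kappa> \<le> 1"
    and tM: "M_ab \<alpha> \<beta> \<kappa> \<le> \<tau>" and tb: "\<tau> \<le> \<beta>*\<kappa>"
  shows "g_abc \<alpha> \<beta> c \<kappa> \<tau> = G0 \<alpha> c \<beta> \<kappa> \<tau>"
proof -
  note MP = M_props[OF a1 b1 k0 bk]
  define a where "a = (1-\<beta>/\<alpha>)*\<kappa> + \<tau>/\<alpha>"
  define b where "b = (\<beta>*\<kappa>-\<tau>)/\<alpha>"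
  have t0: "0 \<le> \<tau>" using MP tM by linarith
  have aa: "\<alpha> * a = (\<alpha>-\<beta>)*\<kappa> + \<tau>" using a1 by (simp add: a_def field_simps)
  have a0: "0 \<le> a"
  proof -
    have "0 \<le> (\<alpha>-\<beta>)*\<kappa> + \<tau>"
    proof (cases "\<alpha> < \<beta>")
      case True then show ?thesis using MP(3) tM by (simp add: algebra_simps)
    next
      case False then show ?thesis using k0 t0 by auto
    qed
    moreover have "a = ((\<alpha>-\<beta>)*\<kappa> + \<tau>)/\<alpha>" using aa a1 by (simp add: field_simps)
    ultimately show ?thesis using a1 by simp
  qed
  have at: "a \<le> \<tau>"
  proof -
    have "(\<alpha>-\<beta>)*\<kappa> \<le> (\<alpha>-1)*\<tau>"
    proof (cases "\<beta> < \<alpha>")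
      case True
      have "(\<alpha>-1)*M_ab \<alpha> \<beta> \<kappa> \<le> (\<alpha>-1)*\<tau>" using tM a1 by (intro mult_left_mono) auto
      then show ?thesis using MP(4)[OF True] by simp
    next
      case False
      have "(\<alpha>-\<beta>)*\<kappa> \<le> 0" using False k0 by (simp add: mult_nonpos_nonneg)
      moreover have "0 \<le> (\<alpha>-1)*\<tau>" using a1 t0 by simp
      ultimately show ?thesis by linarith
    qed
    then have "\<alpha> * a \<le> \<alpha> * \<tau>" using aa by (simp add: algebra_simps)
    then show ?thesis using a1 by simp
  qed
  have bb: "\<alpha> * b = \<beta>*\<kappa> - \<tau>" using a1 by (simp add: b_def)
  have b0: "0 \<le> b" using tb a1 by (simp add: b_def)
  have bt: "b \<le> 1 - \<tau>"
  proof -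
    have "(\<alpha>-1)*\<tau> \<le> (\<alpha>-1)*1" using a1 tb bk by (intro mult_left_mono) auto
    then have "\<beta>*\<kappa> - \<tau> \<le> \<alpha>*(1-\<tau>)" using bk by (simp add: algebra_simps)
    then have "\<alpha>*b \<le> \<alpha>*(1-\<tau>)" using bb by simp
    then show ?thesis using a1 by simp
  qed
  have gam: "gamma_ab \<alpha> \<beta> \<kappa> \<tau> = (if \<tau> \<noteq> 0 then a/\<tau> else 1/\<alpha>)"
    using a1 by (simp add: gamma_ab_def a_def field_simps)
  have del: "delta_ab \<alpha> \<beta> \<kappa> \<tau> = (if 1 - \<tau> \<noteq> 0 then b/(1-\<tau>) else 1/\<alpha>)"
    using a1 by (auto simp: delta_ab_def b_def field_simps)
  have T2: "\<tau> * Hent (gamma_ab \<alpha> \<beta> \<kappa> \<tau>) = xl \<tau> - xl a - xl (\<tau> - a)"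
    unfolding gam by (rule Hent_scale'[OF t0 a0 at])
  have T3: "(1-\<tau>) * Hent (delta_ab \<alpha> \<beta> \<kappa> \<tau>) = xl (1-\<tau>) - xl b - xl (1-\<tau>-b)"
    unfolding del by (rule Hent_scale') (use b0 bt in auto)
  have k1: "\<kappa> \<le> 1" using bk b1 k0
    by (metis dual_order.trans less_eq_real_def mult_le_cancel_right1 not_le)
  have T4: "Hent \<kappa> = - xl \<kappa> - xl (1-\<kappa>)" using k0 k1 by (simp add: Hent_def xl_xlnx)
  show ?thesis unfolding g_abc_def G0_def T2 T3 T4
    by (simp add: a_def[symmetric] b_def[symmetric])
qed



definition Hh :: "real \<Rightarrow> real \<Rightarrow> real \<Rightarrow> real \<Rightarrow> real \<Rightarrow> real" where
  "Hh \<alpha> c \<beta> s t = G0 \<alpha> c \<beta> (s/\<beta>) (M_ab \<alpha> \<beta> (s/\<beta>) + t*(s - M_ab \<alpha> \<beta> (s/\<beta>)))"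

definition Phi :: "real \<Rightarrow> real \<Rightarrow> real \<Rightarrow> real \<Rightarrow> real" where
  "Phi \<alpha> c \<beta> s = (INF t\<in>{0..1}. Hh \<alpha> c \<beta> s t)"

definition FF :: "real \<Rightarrow> real \<Rightarrow> real \<Rightarrow> real" where
  "FF \<alpha> c \<beta> = (SUP s\<in>{0..1}. Phi \<alpha> c \<beta> s)"

lemma amls_eq:
  assumes a1: "\<alpha> > 1" and b1: "\<beta> > 1"
  shows "amls \<alpha> c \<beta> = exp (FF \<alpha> c \<beta>)"
proof -
  have img: "{0..1/\<beta>} = (\<lambda>s. s/\<beta>) ` {0..1}"
  proof
    show "{0..1/\<beta>} \<subseteq> (\<lambda>s. s/\<beta>) ` {0..1}"
    proof
      fix x assume x: "x \<in> {0..1/\<beta>}"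
      have "x = (x*\<beta>)/\<beta>" using b1 by simp
      moreover have "x*\<beta> \<in> {0..1}" using x b1 by (auto simp: le_divide_eq)
      ultimately show "x \<in> (\<lambda>s. s/\<beta>) ` {0..1}" by (rule image_eqI)
    qed
    show "(\<lambda>s. s/\<beta>) ` {0..1} \<subseteq> {0..1/\<beta>}"
      using b1 by (auto intro: divide_right_mono)
  qed
  have inner: "(INF \<tau>\<in>{M_ab \<alpha> \<beta> (s/\<beta>)..\<beta> * (s/\<beta>)}. g_abc \<alpha> \<beta> c (s/\<beta>) \<tau>) = Phi \<alpha> c \<beta> s"
    if s: "s \<in> {0..1}" for s
  proof -
    define M where "M = M_ab \<alpha> \<beta> (s/\<beta>)"
    have bs: "\<beta> * (s/\<beta>) = s" using b1 by simp
    have k0: "0 \<le> s/\<beta>" using s b1 by simp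
    have bk: "\<beta> * (s/\<beta>) \<le> 1" using bs s by simp
    note MP = M_props[OF a1 b1 k0 bk, folded M_def, unfolded bs]
    have fe: "(\<lambda>t. M + t*(s-M)) = (\<lambda>x. (s-M)*x + M)" by (auto simp: fun_eq_iff algebra_simps)
    have img2: "{M..s} = (\<lambda>t. M + t*(s-M)) ` {0..1}"
      unfolding fe image_affinity_atLeastAtMost using MP by auto
    have "(INF \<tau>\<in>{M..s}. g_abc \<alpha> \<beta> c (s/\<beta>) \<tau>) = (INF t\<in>{0..1}. g_abc \<alpha> \<beta> c (s/\<beta>) (M + t*(s-M)))"
      unfolding img2 by (simp add: image_image)
    also have "\<dots> = (INF t\<in>{0..1}. Hh \<alpha> c \<beta> s t)"
    proof (rule INF_cong[OF refl])
      fix t :: real assume t: "t \<in> {0..1}"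
      have "t*(s-M) \<ge> 0" using t MP by auto
      moreover have "t*(s-M) \<le> s-M" using mult_right_mono[of t 1 "s-M"] t MP by auto
      ultimately have "M_ab \<alpha> \<beta> (s/\<beta>) \<le> M + t*(s-M)" "M + t*(s-M) \<le> \<beta> * (s/\<beta>)"
        unfolding bs M_def[symmetric] by linarith+
      from g_eq[OF a1 b1 k0 bk this]
      show "g_abc \<alpha> \<beta> c (s/\<beta>) (M + t*(s-M)) = Hh \<alpha> c \<beta> s t"
        unfolding Hh_def M_def[symmetric] .
    qed
    finally show ?thesis unfolding Phi_def M_def bs .
  qed
  have "(SUP \<kappa>\<in>{0..1/\<beta>}. INF \<tau>\<in>{M_ab \<alpha> \<beta> \<kappa>..\<beta> * \<kappa>}. g_abc \<alpha> \<beta> c \<kappa> \<tau>)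
      = (SUP s\<in>{0..1}. INF \<tau>\<in>{M_ab \<alpha> \<beta> (s/\<beta>)..\<beta> * (s/\<beta>)}. g_abc \<alpha> \<beta> c (s/\<beta>) \<tau>)"
    unfolding img by (simp add: image_image)
  also have "\<dots> = FF \<alpha> c \<beta>" unfolding FF_def using inner by (rule SUP_cong[OF refl])
  finally show ?thesis unfolding amls_def by simp
qed



lemma cont_G0 [continuous_intros]:
  "\<alpha> \<noteq> 0 \<Longrightarrow> continuous_on S f \<Longrightarrow> continuous_on S g \<Longrightarrow> continuous_on S k \<Longrightarrow>
   continuous_on S (\<lambda>x. G0 \<alpha> c (f x) (g x) (k x))"
  unfolding G0_def by (intro continuous_intros) auto

lemma dist_pair_le: "dist (a::real, b::real) (c, d) \<le> \<bar>a - c\<bar> + \<bar>b - d\<bar>"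
  using sqrt_sum_squares_le_sum_abs[of "a-c" "b-d"] by (simp add: dist_Pair_Pair dist_real_def)

lemma Phi_cont:
  fixes S :: "(real \<times> real) set"
  assumes a1: "\<alpha> > 1" and S: "compact S" and mc: "continuous_on S m"
    and S0: "\<And>p. p \<in> S \<Longrightarrow> fst p > 0"
    and mS: "\<And>p. p \<in> S \<Longrightarrow> M_ab \<alpha> (fst p) (snd p / fst p) = m p"
  shows "continuous_on S (\<lambda>p. Phi \<alpha> c (fst p) (snd p))"
proof -
  let ?h = "\<lambda>q::(real\<times>real)\<times>real. Hh \<alpha> c (fst (fst q)) (snd (fst q)) (snd q)"
  have mc2: "continuous_on (S \<times> {0..1}) (\<lambda>q. m (fst q))"
    by (rule continuous_on_compose2[OF mc]) (auto intro!: continuous_intros)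
  have "continuous_on (S \<times> {0..1}) (\<lambda>q. G0 \<alpha> c (fst (fst q)) (snd (fst q) / fst (fst q))
      (m (fst q) + snd q * (snd (fst q) - m (fst q))))"
    using a1 mc2 S0 by (intro continuous_intros) force+
  then have "continuous_on (S \<times> {0..1}) ?h"
  proof (rule continuous_on_eq)
    fix q :: "(real \<times> real) \<times> real" assume q: "q \<in> S \<times> {0..1}"
    then have "M_ab \<alpha> (fst (fst q)) (snd (fst q) / fst (fst q)) = m (fst q)" using mS by auto
    then show "G0 \<alpha> c (fst (fst q)) (snd (fst q) / fst (fst q))
      (m (fst q) + snd q * (snd (fst q) - m (fst q))) = ?h q" by (simp add: Hh_def)
  qed
  from inf_sup_cont(1)[OF S compact_Icc _ this]
  show ?thesis by (simp add: Phi_def)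
qed

lemma FF_cont:
  assumes K: "compact K" and c: "continuous_on (K \<times> {0..1}) (\<lambda>p. Phi \<alpha> c (fst p) (snd p))"
  shows "continuous_on K (FF \<alpha> c)"
proof -
  from inf_sup_cont(2)[OF K compact_Icc _ c]
  show ?thesis by (simp add: FF_def)
qed

lemma FF_cont_left:
  assumes a1: "\<alpha> > 1" and a: "1 < a"
  shows "continuous_on {a..\<alpha>} (FF \<alpha> c)"
proof (rule FF_cont[OF compact_Icc])
  let ?m = "\<lambda>p::real\<times>real. (\<alpha> - fst p)/(\<alpha>-1) * (snd p / fst p)"
  show "continuous_on ({a..\<alpha>} \<times> {0..1}) (\<lambda>p. Phi \<alpha> c (fst p) (snd p))"
  proof (rule Phi_cont[OF a1 compact_Times[OF compact_Icc compact_Icc], where m = ?m])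
    show "continuous_on ({a..\<alpha>} \<times> {0..1}) ?m" using a a1 by (intro continuous_intros) auto
    fix p :: "real \<times> real" assume "p \<in> {a..\<alpha>} \<times> {0..1}"
    then show "M_ab \<alpha> (fst p) (snd p / fst p) = ?m p" by (auto simp: M_ab_def)
  next
    fix p :: "real \<times> real" assume "p \<in> {a..\<alpha>} \<times> {0..1}"
    then show "fst p > 0" using a by auto
  qed
qed

lemma Phi_cont_right:
  fixes S :: "(real \<times> real) set"
  assumes a1: "\<alpha> > 1" and S: "compact S"
    and Sp: "\<And>p. p \<in> S \<Longrightarrow> \<alpha> \<le> fst p \<and> 0 \<le> snd p \<and> \<alpha> * snd p < fst p"
  shows "continuous_on S (\<lambda>p. Phi \<alpha> c (fst p) (snd p))"
proof (rule Phi_cont[OF a1 S])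
  let ?m = "\<lambda>p::real\<times>real. (fst p - \<alpha>)/(1 - \<alpha> * (snd p / fst p)) * (snd p / fst p)"
  have nz: "1 - \<alpha> * (snd p / fst p) \<noteq> 0" "fst p \<noteq> 0" if "p \<in> S" for p
  proof -
    have "fst p > 0" using Sp[OF that] a1 by auto
    then show "fst p \<noteq> 0" by simp
    have "\<alpha> * (snd p / fst p) < 1" using Sp[OF that] \<open>fst p > 0\<close> by (simp add: divide_less_eq)
    then show "1 - \<alpha> * (snd p / fst p) \<noteq> 0" by linarith
  qed
  show "continuous_on S ?m" using nz by (intro continuous_intros) auto
  fix p :: "real \<times> real" assume "p \<in> S"
  then show "M_ab \<alpha> (fst p) (snd p / fst p) = ?m p" using Sp[of p] by (auto simp: M_ab_def)
next
  fix p :: "real \<times> real" assume "p \<in> S"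
  then show "fst p > 0" using Sp[of p] a1 by auto
qed

lemma FF_cont_right:
  assumes a1: "\<alpha> > 1" and a: "\<alpha> < a"
  shows "continuous_on {a..b} (FF \<alpha> c)"
proof (rule FF_cont[OF compact_Icc], rule Phi_cont_right[OF a1 compact_Times[OF compact_Icc compact_Icc]])
  fix p :: "real \<times> real" assume p: "p \<in> {a..b} \<times> {0..1}"
  then have "\<alpha> * snd p \<le> \<alpha>" using a1 by (auto intro: mult_left_le)
  then show "\<alpha> \<le> fst p \<and> 0 \<le> snd p \<and> \<alpha> * snd p < fst p" using p a by auto
qed



lemma Hh_bdd:
  assumes a1: "\<alpha> > 1"
  shows "bdd_below (Hh \<alpha> c \<beta> s ` {0..1})"
proof -
  have "continuous_on {0..1} (\<lambda>t. G0 \<alpha> c \<beta> (s/\<beta>) (M_ab \<alpha> \<beta> (s/\<beta>) + t*(s - M_ab \<alpha> \<beta> (s/\<beta>))))"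
    using a1 by (intro continuous_intros) auto
  then have "continuous_on {0..1} (Hh \<alpha> c \<beta> s)" by (simp add: Hh_def[abs_def])
  then show ?thesis
    by (intro bounded_imp_bdd_below compact_imp_bounded compact_continuous_image) auto
qed

lemma Phi_le:
  assumes a1: "\<alpha> > 1"
  shows "Phi \<alpha> c \<beta> s \<le> G0 \<alpha> c \<beta> (s/\<beta>) s"
proof -
  have "Phi \<alpha> c \<beta> s \<le> Hh \<alpha> c \<beta> s 1"
    unfolding Phi_def by (rule cINF_lower[OF Hh_bdd[OF a1]]) auto
  then show ?thesis by (simp add: Hh_def)
qed

lemma Phi_zero:
  assumes a1: "\<alpha> > 1"
  shows "Phi \<alpha> c \<beta> 0 = 0"
proof -
  have "Hh \<alpha> c \<beta> 0 t = 0" for t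
    by (simp add: Hh_def M_ab_def G0_def xl_def)
  then show ?thesis by (simp add: Phi_def)
qed

lemma e_alpha:
  assumes a1: "\<alpha> > 1"
  shows "G0 \<alpha> c \<alpha> (1/\<alpha>) 1 = 0"
  using a1 by (simp add: G0_def xl_def)

lemma Phi_bdd_above:
  assumes a1: "\<alpha> > 1" and b0: "\<beta> > 0"
  shows "bdd_above (Phi \<alpha> c \<beta> ` {0..1})"
proof -
  have "continuous_on {0..1} (\<lambda>s. G0 \<alpha> c \<beta> (s/\<beta>) s)"
    using a1 b0 by (intro continuous_intros) auto
  then have "bdd_above ((\<lambda>s. G0 \<alpha> c \<beta> (s/\<beta>) s) ` {0..1})"
    by (intro bounded_imp_bdd_above compact_imp_bounded compact_continuous_image) auto
  then obtain B where "\<forall>y\<in>(\<lambda>s. G0 \<alpha> c \<beta> (s/\<beta>) s) ` {0..1}. y \<le> B"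
    unfolding bdd_above_def by blast
  then have B: "\<And>s. s \<in> {0..1} \<Longrightarrow> G0 \<alpha> c \<beta> (s/\<beta>) s \<le> B" by simp
  show ?thesis
  proof (rule bdd_aboveI2[where M=B])
    fix s :: real assume "s \<in> {0..1}"
    then show "Phi \<alpha> c \<beta> s \<le> B" using Phi_le[OF a1, of c \<beta> s] B[of s] by linarith
  qed
qed



lemma FF_right:
  assumes a1: "\<alpha> > 1"
  shows "(FF \<alpha> c \<longlongrightarrow> FF \<alpha> c \<alpha>) (at_right \<alpha>)"
proof (rule tendstoI)
  fix \<epsilon> :: real assume ep: "\<epsilon> > 0"
  define F0 where "F0 = FF \<alpha> c \<alpha>"
  have a0: "\<alpha> > 0" using a1 by simp
  note bddA = Phi_bdd_above[OF a1 a0, of c]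
  have F0pos: "0 \<le> F0"
  proof -
    have "Phi \<alpha> c \<alpha> 0 \<le> F0" unfolding F0_def FF_def by (rule cSUP_upper[OF _ bddA]) auto
    then show ?thesis using Phi_zero[OF a1] by simp
  qed
  have "F0 - \<epsilon>/2 < F0" using ep by simp
  then obtain s1 where s1: "s1 \<in> {0..1}" "F0 - \<epsilon>/2 < Phi \<alpha> c \<alpha> s1"
    unfolding F0_def FF_def using less_cSUP_iff[OF _ bddA] by force
  obtain s0 where s0: "0 \<le> s0" "s0 < 1" "F0 - \<epsilon>/2 < Phi \<alpha> c \<alpha> s0"
  proof (cases "s1 = 1")
    case True
    have "Phi \<alpha> c \<alpha> 1 \<le> 0" using Phi_le[OF a1, of c \<alpha> 1] e_alpha[OF a1, of c] by simp
    then have "F0 - \<epsilon>/2 < Phi \<alpha> c \<alpha> 0" using s1 True Phi_zero[OF a1, of c \<alpha>] by simp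
    then show ?thesis using that[of 0] by simp
  next
    case False
    then show ?thesis using that[of s1] s1 by auto
  qed
  define E where "E = (\<lambda>p::real\<times>real. G0 \<alpha> c (fst p) (snd p / fst p) (snd p))"
  have Ec: "continuous_on {p. fst p > 0} E"
    unfolding E_def using a1 by (intro continuous_intros) auto
  have E1: "E (\<alpha>, 1) = 0" using e_alpha[OF a1] by (simp add: E_def)
  obtain \<eta>1 where \<eta>1: "\<eta>1 > 0" and
    hE: "\<And>p. p \<in> {p. fst p > 0} \<Longrightarrow> dist p (\<alpha>,1) < \<eta>1 \<Longrightarrow> dist (E p) (E (\<alpha>,1)) < \<epsilon>/2"
    using Ec ep a0 unfolding continuous_on_iff
    by (metis (no_types, lifting) fst_conv half_gt_zero mem_Collect_eq)
  define \<eta> where "\<eta> = min (\<eta>1/2) (1 - s0)"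
  have \<eta>0: "\<eta> > 0" using \<eta>1 s0 by (simp add: \<eta>_def)
  define R where "R = {\<alpha>..\<alpha>+1} \<times> {0..1-\<eta>}"
  have Rc: "continuous_on R (\<lambda>p. Phi \<alpha> c (fst p) (snd p))"
    unfolding R_def
  proof (rule Phi_cont_right[OF a1 compact_Times[OF compact_Icc compact_Icc]])
    fix p :: "real \<times> real" assume p: "p \<in> {\<alpha>..\<alpha>+1} \<times> {0..1-\<eta>}"
    then have "\<alpha> * snd p \<le> \<alpha> * (1-\<eta>)" using a0 by (intro mult_left_mono) auto
    also have "\<dots> < \<alpha>" using a0 \<eta>0 by simp
    finally show "\<alpha> \<le> fst p \<and> 0 \<le> snd p \<and> \<alpha> * snd p < fst p" using p by auto
  qed
  have "uniformly_continuous_on R (\<lambda>p. Phi \<alpha> c (fst p) (snd p))"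
    by (rule compact_uniformly_continuous[OF Rc]) (simp add: R_def compact_Times)
  then obtain d where d: "d > 0" and
    hd: "\<And>p p'. p \<in> R \<Longrightarrow> p' \<in> R \<Longrightarrow> dist p' p < d \<Longrightarrow>
       dist (Phi \<alpha> c (fst p') (snd p')) (Phi \<alpha> c (fst p) (snd p)) < \<epsilon>/2"
    unfolding uniformly_continuous_on_def using ep by (metis half_gt_zero)
  define b where "b = \<alpha> + min (min d 1) (\<eta>1/2)"
  have "b > \<alpha>" using d \<eta>1 by (simp add: b_def)
  moreover have "dist (FF \<alpha> c y) (FF \<alpha> c \<alpha>) < \<epsilon>" if y: "\<alpha> < y" "y < b" for y
  proof -
    have y0: "y > 0" using y a0 by simp
    have close: "\<bar>Phi \<alpha> c y s - Phi \<alpha> c \<alpha> s\<bar> < \<epsilon>/2" if s: "0 \<le> s" "s \<le> 1 - \<eta>" for s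
    proof -
      have "(y,s) \<in> R" "(\<alpha>,s) \<in> R" using s y b_def by (auto simp: R_def)
      moreover have "dist (y,s) (\<alpha>,s) < d" using y b_def by (simp add: dist_Pair_Pair dist_real_def)
      ultimately show ?thesis using hd[of "(\<alpha>,s)" "(y,s)"] by (simp add: dist_real_def)
    qed
    have up: "Phi \<alpha> c y s \<le> F0 + \<epsilon>/2" if s: "s \<in> {0..1}" for s
    proof (cases "s > 1 - \<eta>1/2")
      case True
      have "dist (y,s) (\<alpha>,1) \<le> \<bar>y - \<alpha>\<bar> + \<bar>s - 1\<bar>" by (rule dist_pair_le)
      also have "\<dots> < \<eta>1" using True y s b_def by auto
      finally have "dist (E (y,s)) (E (\<alpha>,1)) < \<epsilon>/2" using hE[of "(y,s)"] y0 by simp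
      then have "E (y,s) < \<epsilon>/2" using E1 by (simp add: dist_real_def)
      then have "Phi \<alpha> c y s < \<epsilon>/2" using Phi_le[OF a1, of c y s] by (simp add: E_def)
      then show ?thesis using F0pos by simp
    next
      case False
      then have "s \<le> 1 - \<eta>" using \<eta>_def by auto
      moreover have "0 \<le> s" using s by simp
      ultimately have "Phi \<alpha> c y s < Phi \<alpha> c \<alpha> s + \<epsilon>/2" using close[of s] \<open>s \<le> 1 - \<eta>\<close> s abs_ge_self[of "Phi \<alpha> c y s - Phi \<alpha> c \<alpha> s"] by linarith
      moreover have "Phi \<alpha> c \<alpha> s \<le> F0" unfolding F0_def FF_def by (rule cSUP_upper[OF s bddA])
      ultimately show ?thesis by simp
    qed
    have U: "FF \<alpha> c y \<le> F0 + \<epsilon>/2" unfolding FF_def by (rule cSUP_least) (use up in auto)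
    have "s0 \<le> 1 - \<eta>" using \<eta>_def by auto
    then have "Phi \<alpha> c \<alpha> s0 - \<epsilon>/2 < Phi \<alpha> c y s0" using close[of s0] \<open>s0 \<le> 1 - \<eta>\<close> s0(1) abs_ge_minus_self[of "Phi \<alpha> c y s0 - Phi \<alpha> c \<alpha> s0"] by linarith
    moreover have "Phi \<alpha> c y s0 \<le> FF \<alpha> c y" unfolding FF_def
      by (rule cSUP_upper[OF _ Phi_bdd_above[OF a1 y0]]) (use s0 in auto)
    ultimately have L: "F0 - \<epsilon> < FF \<alpha> c y" using s0 by simp
    show ?thesis using U L ep unfolding F0_def dist_real_def by auto
  qed
  ultimately show "eventually (\<lambda>y. dist (FF \<alpha> c y) (FF \<alpha> c \<alpha>) < \<epsilon>) (at_right \<alpha>)"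
    unfolding eventually_at_right_field by blast
qed

lemma isCont_FF:
  assumes a1: "\<alpha> > 1" and b1: "\<beta> > 1"
  shows "isCont (FF \<alpha> c) \<beta>"
proof -
  consider "\<beta> < \<alpha>" | "\<beta> = \<alpha>" | "\<beta> > \<alpha>" by linarith
  then show ?thesis
  proof cases
    case 1
    have "\<beta> \<in> interior {(1+\<beta>)/2..\<alpha>}" using 1 b1 by simp
    then show ?thesis using continuous_on_interior[OF FF_cont_left[OF a1, of "(1+\<beta>)/2" c]] b1 by simp
  next
    case 2
    have "(FF \<alpha> c \<longlongrightarrow> FF \<alpha> c \<alpha>) (at_left \<alpha>)"
      using continuous_on_Icc_at_leftD[OF FF_cont_left[OF a1, of "(1+\<alpha>)/2" c]] a1 by simp
    then have "continuous (at_left \<alpha>) (FF \<alpha> c)" by (simp add: continuous_within)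
    moreover have "continuous (at_right \<alpha>) (FF \<alpha> c)"
      using FF_right[OF a1] by (simp add: continuous_within)
    ultimately show ?thesis using 2 continuous_at_split by blast
  next
    case 3
    have "\<beta> \<in> interior {(\<alpha>+\<beta>)/2..\<beta>+1}" using 3 by simp
    then show ?thesis
      using continuous_on_interior[OF FF_cont_right[OF a1, of "(\<alpha>+\<beta>)/2" "\<beta>+1" c]] 3 by simp
  qed
qed

theorem lemma5p6:
  fixes \<alpha> c :: real
  assumes "\<alpha> > 1" and "c > 1"
  shows "continuous_on {1<..} (\<lambda>x. amls \<alpha> c x)"
proof -
  have "continuous_on {1<..} (\<lambda>x. exp (FF \<alpha> c x))"
    by (intro continuous_at_imp_continuous_on ballI continuous_intros isCont_FF[OF assms(1)]) auto
  then show ?thesis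
    by (rule continuous_on_eq) (simp add: amls_eq[OF assms(1)])
qed


end
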